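(* Let $X$ be a topological space with $|X|\ge 2$, $G$ an infinite Abelian group, $f\colon G\to X$ a Korovin mapping and $G_f\subseteq X^G$ the corresponding Korovin orbit. Suppose that one of the following holds: (a) the space $X^\omega$ is pseudo-$\aleph_1$-compact; (b) $X$ is first-countable; (c) $X$ is separable. Then $G_f$ is a $T_{3.5}$-space if and only if $X$ is a $T_{3.5}$-space.
   Context: $X^G$ carries the product topology. For $f\in X^G$ and $g\in G$ let $gf\in X^G$ be given by $(gf)(x)=f(xg)$, and let $G_f=\{gf:g\in G\}\subseteq X^G$ with the subspace topology. The map $f\colon G\to X$ is a Korovin mapping if $\pi_M(G_f)=X^M$ for every countable $M\subseteq G$, where $\pi_M\colon X^G\to X^M$ is the projection; in that case $G_f$ is called a Korovin orbit. A space is pseudo-$\aleph_1$-compact if every locally finite family of open sets in it is countable. A space is $T_{3.5}$ if for every closed set $F$ and point $x\notin F$ there is a continuous $h\colon X\to\mathbb{R}$ with $h(x)=1$ and $h(F)\subseteq\{0\}$ (no $T_1$ assumed). *)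

theory Defs
  imports "HOL-Analysis.Analysis"
begin

definition korovin_orbit :: "('g::ab_group_add \<Rightarrow> 'a) \<Rightarrow> ('g \<Rightarrow> 'a) set" where
  "korovin_orbit f = range (\<lambda>g. (\<lambda>x. f (x + g)))"

definition korovin_mapping :: "'a topology \<Rightarrow> ('g::ab_group_add \<Rightarrow> 'a) \<Rightarrow> bool" where
  "korovin_mapping X f \<longleftrightarrow>
     f ` UNIV \<subseteq> topspace X \<and>
     (\<forall>M::'g set. countable M \<longrightarrow>
        (\<lambda>h. restrict h M) ` korovin_orbit f = (PiE M (\<lambda>_. topspace X)))"

definition locally_finite_in :: "'a topology \<Rightarrow> 'a set set \<Rightarrow> bool" where
  "locally_finite_in T \<U> \<longleftrightarrow>
     (\<forall>x \<in> topspace T. \<exists>V. openin T V \<and> x \<in> V \<and> finite {A \<in> \<U>. A \<inter> V \<noteq> {}})"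

definition pseudo_aleph1_compact :: "'a topology \<Rightarrow> bool" where
  "pseudo_aleph1_compact T \<longleftrightarrow>
     (\<forall>\<U>. (\<forall>A \<in> \<U>. openin T A) \<and> locally_finite_in T \<U> \<longrightarrow> countable \<U>)"

text \<open>T_{3.5} as in the paper (no T_1 assumed).\<close>
definition t35_space :: "'a topology \<Rightarrow> bool" where
  "t35_space T \<longleftrightarrow>
     (\<forall>F x. closedin T F \<and> x \<in> topspace T \<and> x \<notin> F \<longrightarrow>
        (\<exists>h. continuous_map T euclideanreal h \<and> h x = 1 \<and> h ` F \<subseteq> {0}))"

end

theory Submission
  imports Defs
begin


lemma t35_iff_crs: "t35_space T \<longleftrightarrow> completely_regular_space T"
proof
  assume H: "t35_space T"
  show "completely_regular_space T"
    unfolding completely_regular_space_alt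
  proof (intro allI impI)
    fix S x assume S: "closedin T S" and x: "x \<in> topspace T - S"
    then obtain h where "continuous_map T euclideanreal h" "h x = 1" "h ` S \<subseteq> {0}"
      using H unfolding t35_space_def by blast
    then show "\<exists>f. continuous_map T euclideanreal f \<and> f x = 0 \<and> f ` S \<subseteq> {1}"
      by (intro exI[of _ "\<lambda>y. 1 - h y"] conjI continuous_map_diff continuous_map_const[THEN iffD2]) auto
  qed
next
  assume H: "completely_regular_space T"
  show "t35_space T"
    unfolding t35_space_def
  proof (intro allI impI)
    fix F x assume A: "closedin T F \<and> x \<in> topspace T \<and> x \<notin> F"
    then obtain h where "continuous_map T euclideanreal h" "h x = 0" "h ` F \<subseteq> {1}"
      using H unfolding completely_regular_space_alt by blast
    then show "\<exists>h. continuous_map T euclideanreal h \<and> h x = 1 \<and> h ` F \<subseteq> {0}"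
      by (intro exI[of _ "\<lambda>y. 1 - h y"] conjI continuous_map_diff continuous_map_const[THEN iffD2]) auto
  qed
qed

definition box :: "'a topology \<Rightarrow> ('g \<Rightarrow> 'a set) \<Rightarrow> bool" where
  "box X V \<longleftrightarrow> (\<forall>a. openin X (V a)) \<and> finite {a. V a \<noteq> topspace X}"

locale KOR =
  fixes X :: "'a topology" and f :: "'g::ab_group_add \<Rightarrow> 'a"
  assumes kor: "korovin_mapping X f"
begin

abbreviation "XG \<equiv> product_topology (\<lambda>_::'g. X) UNIV"
abbreviation "Y \<equiv> korovin_orbit f"

lemma Y_sub: "Y \<subseteq> topspace XG"
  using kor unfolding korovin_mapping_def korovin_orbit_def by (auto simp: PiE_UNIV_domain)

lemma Y_top: "u \<in> Y \<Longrightarrow> u a \<in> topspace X"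
  using Y_sub by (auto simp: PiE_UNIV_domain)

lemma realize:
  assumes "countable N" "\<And>a. a \<in> N \<Longrightarrow> t a \<in> topspace X"
  shows "\<exists>u\<in>Y. \<forall>a\<in>N. u a = t a"
proof -
  have "restrict t N \<in> (\<lambda>h. restrict h N) ` Y"
    using kor assms unfolding korovin_mapping_def by auto
  then obtain u where "u \<in> Y" "restrict u N = restrict t N" by auto
  then show ?thesis
  proof (intro bexI ballI)
    fix a assume "a \<in> N"
    then show "u a = t a" using \<open>restrict u N = restrict t N\<close>
      by (metis restrict_apply')
  qed (rule \<open>u \<in> Y\<close>)
qed

lemma box_open: "box X V \<Longrightarrow> openin XG (Pi UNIV V)"
  unfolding box_def by (simp add: openin_PiE_gen flip: PiE_UNIV_domain)

lemma box_meets_Y: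
  assumes "box X V" "b \<in> Pi UNIV V"
  shows "\<exists>u\<in>Y. u \<in> Pi UNIV V"
proof -
  let ?N = "{a. V a \<noteq> topspace X}"
  have "countable ?N" using assms unfolding box_def by (simp add: countable_finite)
  moreover have "b a \<in> topspace X" if "a \<in> ?N" for a
    using assms openin_subset unfolding box_def by fastforce
  ultimately obtain u where u: "u \<in> Y" "\<forall>a\<in>?N. u a = b a"
    using realize by blast
  have "u \<in> Pi UNIV V"
  proof
    fix a show "u a \<in> V a"
    proof (cases "V a = topspace X")
      case True then show ?thesis using Y_top[OF u(1)] by simp
    next
      case False then show ?thesis using u assms by auto
    qed
  qed
  with u show ?thesis by blast
qed

lemma open_has_box:
  assumes "openin XG W" "z \<in> W"
  shows "\<exists>T. box X T \<and> z \<in> Pi UNIV T \<and> Pi UNIV T \<subseteq> W"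
  using product_topology_open_contains_basis[OF assms]
  unfolding box_def by (auto simp: PiE_UNIV_domain)

lemma open_meets_Y:
  assumes "openin XG W" "z \<in> W"
  shows "\<exists>u\<in>Y. u \<in> W"
  using open_has_box[OF assms] box_meets_Y by blast

lemma glue:
  assumes T: "box X T" and B: "box X B" and q: "q \<in> Y" "q \<in> Pi UNIV T"
    and w: "w \<in> Y" "w \<in> Pi UNIV B" and S: "countable S" "{a. T a \<noteq> topspace X} \<subseteq> S"
    and qB: "\<And>a. a \<in> S \<Longrightarrow> B a \<noteq> topspace X \<Longrightarrow> q a \<in> B a"
  shows "\<exists>u\<in>Y. u \<in> Pi UNIV T \<and> u \<in> Pi UNIV B \<and> (\<forall>a\<in>S. u a = q a)"
proof -
  let ?t = "\<lambda>a. if a \<in> S then q a else w a"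
  have "countable (S \<union> {a. B a \<noteq> topspace X})"
    using S B unfolding box_def by (simp add: countable_finite)
  moreover have "?t a \<in> topspace X" for a
    using q w Y_top by simp
  ultimately obtain u where u: "u \<in> Y" "\<forall>a\<in>S \<union> {a. B a \<noteq> topspace X}. u a = ?t a"
    using realize[of "S \<union> {a. B a \<noteq> topspace X}" ?t] by blast
  have "u \<in> Pi UNIV T"
  proof
    fix a show "u a \<in> T a"
    proof (cases "T a = topspace X")
      case True then show ?thesis using Y_top[OF u(1)] by simp
    next
      case False
      then have "a \<in> S" using S by blast
      then have "u a = q a" using u by simp
      moreover have "q a \<in> T a" using q(2) by blast
      ultimately show ?thesis by simp
    qed
  qed
  moreover have "u \<in> Pi UNIV B"
  proof
    fix a show "u a \<in> B a"
    proof (cases "B a = topspace X")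
      case True then show ?thesis using Y_top[OF u(1)] by simp
    next
      case False
      then have "u a = ?t a" using u by blast
      then show ?thesis using qB False w by (cases "a \<in> S") auto
    qed
  qed
  ultimately show ?thesis using u by auto
qed

end

locale KORPHI = KOR X f for X :: "'a topology" and f :: "'g::ab_group_add \<Rightarrow> 'a" +
  fixes \<phi> :: "('g \<Rightarrow> 'a) \<Rightarrow> real"
  assumes cont: "continuous_map (subtopology (product_topology (\<lambda>_::'g. X) UNIV) (korovin_orbit f)) euclideanreal \<phi>"
begin

lemma cont_box:
  assumes "q \<in> Y" "r > 0"
  shows "\<exists>T. box X T \<and> q \<in> Pi UNIV T \<and> (\<forall>u\<in>Y. u \<in> Pi UNIV T \<longrightarrow> \<bar>\<phi> u - \<phi> q\<bar> < r)"
proof -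
  have "openin (subtopology XG Y) {u \<in> topspace (subtopology XG Y). \<phi> u \<in> ball (\<phi> q) r}"
    using openin_continuous_map_preimage[OF cont, of "ball (\<phi> q) r"] by simp
  then obtain Op where Op: "openin XG Op" "{u \<in> topspace (subtopology XG Y). \<phi> u \<in> ball (\<phi> q) r} = Op \<inter> Y"
    by (auto simp: openin_subtopology)
  have "q \<in> {u \<in> topspace (subtopology XG Y). \<phi> u \<in> ball (\<phi> q) r}"
    using assms Y_sub by auto
  then have "q \<in> Op" using Op by blast
  then obtain T where T: "box X T" "q \<in> Pi UNIV T" "Pi UNIV T \<subseteq> Op"
    using open_has_box Op by blast
  have "\<bar>\<phi> u - \<phi> q\<bar> < r" if "u \<in> Y" "u \<in> Pi UNIV T" for u
  proof -
    have "u \<in> Op \<inter> Y" using that T by auto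
    then have "\<phi> u \<in> ball (\<phi> q) r" using Op(2) by blast
    then show ?thesis by (simp add: dist_real_def abs_minus_commute)
  qed
  with T show ?thesis by blast
qed

end


context KORPHI begin

definition Phi :: "('g \<Rightarrow> 'a) \<Rightarrow> real" where
  "Phi z = Inf {Sup (\<phi> ` (Y \<inter> W)) | W. openin XG W \<and> z \<in> W}"

lemma Phi_props:
  assumes bnd: "\<And>u. u \<in> Y \<Longrightarrow> 0 \<le> \<phi> u \<and> \<phi> u \<le> 1"
    and W: "openin XG W" "z \<in> W"
  shows "\<And>c. (\<And>u. u \<in> Y \<Longrightarrow> u \<in> W \<Longrightarrow> \<phi> u \<le> c) \<Longrightarrow> Phi z \<le> c"
    and "\<And>c. (\<And>u. u \<in> Y \<Longrightarrow> u \<in> W \<Longrightarrow> c \<le> \<phi> u) \<Longrightarrow> c \<le> Phi z"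
proof -
  let ?SS = "{Sup (\<phi> ` (Y \<inter> W)) | W. openin XG W \<and> z \<in> W}"
  have ne: "Y \<inter> W' \<noteq> {}" if "openin XG W'" "z \<in> W'" for W'
    using open_meets_Y[OF that] by blast
  have up: "\<phi> u \<le> Sup (\<phi> ` (Y \<inter> W'))" if "u \<in> Y \<inter> W'" for u W'
  proof (rule cSup_upper)
    show "\<phi> u \<in> \<phi> ` (Y \<inter> W')" using that by blast
    show "bdd_above (\<phi> ` (Y \<inter> W'))" using bnd by (intro bdd_aboveI[of _ 1]) auto
  qed
  have bb: "bdd_below ?SS"
  proof (rule bdd_belowI[of _ 0])
    fix s assume "s \<in> ?SS"
    then obtain W' where W': "openin XG W'" "z \<in> W'" "s = Sup (\<phi> ` (Y \<inter> W'))" by blast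
    then obtain u where "u \<in> Y \<inter> W'" using ne by blast
    then show "0 \<le> s" using up[of u W'] bnd[of u] W' by auto
  qed
  have L1: "Phi z \<le> Sup (\<phi> ` (Y \<inter> W))"
    unfolding Phi_def by (rule cInf_lower) (use W bb in auto)
  show "Phi z \<le> c" if H: "\<And>u. u \<in> Y \<Longrightarrow> u \<in> W \<Longrightarrow> \<phi> u \<le> c" for c
  proof -
    have "Sup (\<phi> ` (Y \<inter> W)) \<le> c"
      by (rule cSup_least) (use ne[OF W] H in auto)
    with L1 show ?thesis by linarith
  qed
  show "c \<le> Phi z" if H: "\<And>u. u \<in> Y \<Longrightarrow> u \<in> W \<Longrightarrow> c \<le> \<phi> u" for c
    unfolding Phi_def
  proof (rule cInf_greatest)
    show "?SS \<noteq> {}" using W by blast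
    fix s assume "s \<in> ?SS"
    then obtain W' where W': "openin XG W'" "z \<in> W'" "s = Sup (\<phi> ` (Y \<inter> W'))" by blast
    have "openin XG (W \<inter> W')" "z \<in> W \<inter> W'" using W W' by auto
    then obtain u where "u \<in> Y \<inter> (W \<inter> W')" using ne by blast
    then show "c \<le> s" using up[of u W'] H[of u] W' by auto
  qed
qed

lemma final:
  assumes bnd: "\<And>u. u \<in> Y \<Longrightarrow> 0 \<le> \<phi> u \<and> \<phi> u \<le> 1"
    and osc: "\<And>z e. z \<in> topspace XG \<Longrightarrow> e > 0 \<Longrightarrow>
              \<exists>W. openin XG W \<and> z \<in> W \<and> (\<forall>q\<in>Y\<inter>W. \<forall>q'\<in>Y\<inter>W. \<bar>\<phi> q - \<phi> q'\<bar> \<le> e)"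
    and p: "p \<in> Y" "\<phi> p = 1"
    and F: "F \<subseteq> topspace X"
    and C: "\<And>u. u \<in> Y \<Longrightarrow> u 0 \<in> F \<Longrightarrow> \<phi> u = 0"
  shows "\<exists>h. continuous_map X euclideanreal h \<and> h (p 0) = 1 \<and> h ` F \<subseteq> {0}"
proof -
  define h where "h y = Phi (p(0 := y))" for y
  have ptop: "p(0 := y) \<in> topspace XG" if "y \<in> topspace X" for y
    using that Y_top[OF p(1)] by (auto simp: PiE_UNIV_domain)
  have slice: "continuous_map X XG (\<lambda>y. p(0 := y))"
    unfolding continuous_map_componentwise_UNIV
  proof
    fix k
    show "continuous_map X X (\<lambda>y. (p(0 := y)) k)"
    proof (cases "k = 0")
      case True then show ?thesis by simp
    next
      case False then show ?thesis using Y_top[OF p(1)] by simp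
    qed
  qed
  have topW: "openin XG (topspace XG)" by (rule openin_topspace)
  have near: "\<bar>Phi z' - Phi z\<bar> \<le> 2 * e"
    if W: "openin XG W" "z \<in> W" "z' \<in> W" and o: "\<forall>q\<in>Y\<inter>W. \<forall>q'\<in>Y\<inter>W. \<bar>\<phi> q - \<phi> q'\<bar> \<le> e" for z z' W e
  proof -
    obtain u0 where u0: "u0 \<in> Y" "u0 \<in> W" using open_meets_Y[OF W(1,2)] by blast
    have lo: "\<phi> u0 - e \<le> Phi v" and hi: "Phi v \<le> \<phi> u0 + e" if "v \<in> W" for v
    proof -
      have oo: "\<bar>\<phi> u0 - \<phi> u\<bar> \<le> e" if "u \<in> Y" "u \<in> W" for u
        using o u0 that by blast
      show "\<phi> u0 - e \<le> Phi v"
      proof (rule Phi_props(2)[OF bnd W(1) that])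
        fix u assume "u \<in> Y" "u \<in> W"
        then show "\<phi> u0 - e \<le> \<phi> u" using oo by fastforce
      qed
      show "Phi v \<le> \<phi> u0 + e"
      proof (rule Phi_props(1)[OF bnd W(1) that])
        fix u assume "u \<in> Y" "u \<in> W"
        then show "\<phi> u \<le> \<phi> u0 + e" using oo by fastforce
      qed
    qed
    show ?thesis using lo[OF W(2)] hi[OF W(2)] lo[OF W(3)] hi[OF W(3)] by linarith
  qed
  have "continuous_map X Met_TC.mtopology h"
    unfolding Met_TC.continuous_map_to_metric mball_eq_ball
  proof (intro ballI allI impI)
    fix y and e :: real assume y: "y \<in> topspace X" and e: "e > 0"
    obtain W where W: "openin XG W" "p(0 := y) \<in> W"
      and o: "\<forall>q\<in>Y\<inter>W. \<forall>q'\<in>Y\<inter>W. \<bar>\<phi> q - \<phi> q'\<bar> \<le> e/3"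
      using osc[OF ptop[OF y], of "e/3"] e by auto
    define U where "U = {y' \<in> topspace X. p(0 := y') \<in> W}"
    have "openin X U" unfolding U_def
      using openin_continuous_map_preimage[OF slice W(1)] by simp
    moreover have "y \<in> U" using U_def y W by simp
    moreover have "h y' \<in> ball (h y) e" if "y' \<in> U" for y'
    proof -
      have "\<bar>h y' - h y\<bar> \<le> 2 * (e/3)"
        unfolding h_def using near[OF W(1) W(2) _ o, of "p(0 := y')"] that U_def by simp
      then show ?thesis using e by (simp add: dist_real_def abs_minus_commute)
    qed
    ultimately show "\<exists>U. openin X U \<and> y \<in> U \<and> (\<forall>y'\<in>U. h y' \<in> ball (h y) e)" by blast
  qed
  then have "continuous_map X euclideanreal h" by simp
  moreover have "h (p 0) = 1"
  proof -
    have "p(0 := p 0) = p" by simp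
    moreover have pt: "p \<in> topspace XG" using Y_sub p by blast
    moreover have "Phi p \<le> 1"
      by (rule Phi_props(1)[OF bnd topW pt]) (use bnd in auto)
    moreover have "1 \<le> Phi p"
      unfolding Phi_def
    proof (rule cInf_greatest)
      show "{Sup (\<phi> ` (Y \<inter> W)) |W. openin XG W \<and> p \<in> W} \<noteq> {}" using topW pt by blast
      fix s assume "s \<in> {Sup (\<phi> ` (Y \<inter> W)) |W. openin XG W \<and> p \<in> W}"
      then obtain W' where W': "openin XG W'" "p \<in> W'" "s = Sup (\<phi> ` (Y \<inter> W'))" by blast
      have "\<phi> p \<le> Sup (\<phi> ` (Y \<inter> W'))"
      proof (rule cSup_upper)
        show "\<phi> p \<in> \<phi> ` (Y \<inter> W')" using p W' by blast
        show "bdd_above (\<phi> ` (Y \<inter> W'))" using bnd by (intro bdd_aboveI[of _ 1]) auto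
      qed
      then show "1 \<le> s" using p W' by simp
    qed
    ultimately show ?thesis unfolding h_def by simp
  qed
  moreover have "h y = 0" if y: "y \<in> F" for y
  proof -
    have yt: "y \<in> topspace X" using F y by blast
    let ?z = "p(0 := y)"
    have "Phi ?z \<le> e" if e: "e > 0" for e
    proof -
      obtain W where W: "openin XG W" "?z \<in> W"
        and o: "\<forall>q\<in>Y\<inter>W. \<forall>q'\<in>Y\<inter>W. \<bar>\<phi> q - \<phi> q'\<bar> \<le> e"
        using osc[OF ptop[OF yt] e] by auto
      obtain T where T: "box X T" "?z \<in> Pi UNIV T" "Pi UNIV T \<subseteq> W"
        using open_has_box[OF W] by blast
      have "countable ({a. T a \<noteq> topspace X} \<union> {0})"
        using T unfolding box_def by (simp add: countable_finite)
      moreover have "?z a \<in> topspace X" for a using yt Y_top[OF p(1)] by simp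
      ultimately obtain u where u: "u \<in> Y" "\<forall>a\<in>{a. T a \<noteq> topspace X} \<union> {0}. u a = ?z a"
        using realize by blast
      have "u \<in> Pi UNIV T"
      proof
        fix a show "u a \<in> T a"
        proof (cases "T a = topspace X")
          case True then show ?thesis using Y_top[OF u(1)] by simp
        next
          case False then have "u a = ?z a" using u by blast
          moreover have "?z a \<in> T a" using T(2) by blast
          ultimately show ?thesis by simp
        qed
      qed
      then have uW: "u \<in> W" using T by blast
      have "\<phi> u = 0" using C[OF u(1)] u y by simp
      show ?thesis
      proof (rule Phi_props(1)[OF bnd W])
        fix q assume "q \<in> Y" "q \<in> W"
        then have "\<bar>\<phi> q - \<phi> u\<bar> \<le> e" using o u uW by blast
        then show "\<phi> q \<le> e" using \<open>\<phi> u = 0\<close> by simp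
      qed
    qed
    then have "Phi ?z \<le> 0"
      by (metis dense_le_bounded not_less)
    moreover have "0 \<le> Phi ?z"
      by (rule Phi_props(2)[OF bnd topW ptop[OF yt]]) (use bnd in auto)
    ultimately show ?thesis unfolding h_def by simp
  qed
  ultimately show ?thesis by blast
qed

end


lemma finite_subset_mono_Union:
  fixes Ss :: "nat \<Rightarrow> 'b set"
  assumes "finite A" "A \<subseteq> (\<Union>n. Ss n)" "\<And>n. Ss n \<subseteq> Ss (Suc n)"
  shows "\<exists>k. A \<subseteq> Ss k"
  using assms(1,2)
proof (induction A rule: finite_induct)
  case empty then show ?case by blast
next
  case (insert a A)
  then obtain k where k: "A \<subseteq> Ss k" by blast
  obtain m where m: "a \<in> Ss m" using insert by blast
  have "Ss k \<subseteq> Ss (max k m)" "Ss m \<subseteq> Ss (max k m)"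
    using lift_Suc_mono_le[of Ss, OF assms(3)] by auto
  then show ?case using k m by blast
qed

context KORPHI begin

definition TB :: "real \<Rightarrow> ('g \<Rightarrow> 'a) \<Rightarrow> 'g \<Rightarrow> 'a set" where
  "TB r q = (SOME T. box X T \<and> q \<in> Pi UNIV T \<and> (\<forall>u\<in>Y. u \<in> Pi UNIV T \<longrightarrow> \<bar>\<phi> u - \<phi> q\<bar> < r))"

lemma TB:
  assumes "q \<in> Y" "r > 0"
  shows "box X (TB r q)" "q \<in> Pi UNIV (TB r q)"
    "\<And>u. u \<in> Y \<Longrightarrow> u \<in> Pi UNIV (TB r q) \<Longrightarrow> \<bar>\<phi> u - \<phi> q\<bar> < r"
  using someI_ex[OF cont_box[OF assms]] unfolding TB_def by blast+

lemma osc_fc: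
  assumes fc: "first_countable X" and z: "z \<in> topspace XG" and e: "e > 0"
  shows "\<exists>W. openin XG W \<and> z \<in> W \<and> (\<forall>q\<in>Y\<inter>W. \<forall>q'\<in>Y\<inter>W. \<bar>\<phi> q - \<phi> q'\<bar> \<le> e)"
proof (rule ccontr)
  assume nW: "\<not> ?thesis"
  have za: "z a \<in> topspace X" for a using z by (auto simp: PiE_UNIV_domain)
  have exB: "\<exists>\<B>. countable \<B> \<and> (\<forall>V\<in>\<B>. openin X V \<and> z a \<in> V) \<and> \<B> \<noteq> {} \<and>
          (\<forall>U. openin X U \<and> z a \<in> U \<longrightarrow> (\<exists>V\<in>\<B>. V \<subseteq> U))" for a
  proof -
    obtain \<B> where B: "countable \<B>" "\<forall>V\<in>\<B>. openin X V"
      "\<forall>U. openin X U \<and> z a \<in> U \<longrightarrow> (\<exists>V \<in> \<B>. z a \<in> V \<and> V \<subseteq> U)"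
      using fc za[of a] unfolding first_countable_def by meson
    have "{V\<in>\<B>. z a \<in> V} \<noteq> {}" using B(3) za[of a] by (metis (mono_tags, lifting) empty_Collect_eq openin_topspace)
    then show ?thesis using B by (intro exI[of _ "{V\<in>\<B>. z a \<in> V}"]) auto
  qed
  define BB where "BB a = (SOME \<B>. countable \<B> \<and> (\<forall>V\<in>\<B>. openin X V \<and> z a \<in> V) \<and> \<B> \<noteq> {} \<and>
          (\<forall>U. openin X U \<and> z a \<in> U \<longrightarrow> (\<exists>V\<in>\<B>. V \<subseteq> U)))" for a
  have BBa: "countable (BB a) \<and> (\<forall>V\<in>BB a. openin X V \<and> z a \<in> V) \<and> BB a \<noteq> {} \<and>
          (\<forall>U. openin X U \<and> z a \<in> U \<longrightarrow> (\<exists>V\<in>BB a. V \<subseteq> U))" for a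
    unfolding BB_def by (rule someI_ex[OF exB])
  have BB: "\<And>a. countable (BB a)" "\<And>a V. V \<in> BB a \<Longrightarrow> openin X V \<and> z a \<in> V"
    "\<And>a. BB a \<noteq> {}" "\<And>a U. openin X U \<Longrightarrow> z a \<in> U \<Longrightarrow> \<exists>V\<in>BB a. V \<subseteq> U"
    using BBa by blast+
  define \<beta> where "\<beta> a n = from_nat_into (BB a) n" for a n
  have \<beta>: "openin X (\<beta> a n) \<and> z a \<in> \<beta> a n" for a n
    using BB(2) from_nat_into[OF BB(3)] unfolding \<beta>_def by blast
  define \<gamma> where "\<gamma> a n = \<Inter> (\<beta> a ` {..n})" for a n
  have \<gamma>open: "openin X (\<gamma> a n)" for a n
    unfolding \<gamma>_def by (rule openin_Inter) (use \<beta> in auto)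
  have \<gamma>z: "z a \<in> \<gamma> a n" for a n unfolding \<gamma>_def using \<beta> by auto
  have \<gamma>base: "\<exists>N. \<forall>n\<ge>N. \<gamma> a n \<subseteq> U" if UU: "openin X U" "z a \<in> U" for a U
  proof -
    obtain V where V: "V \<in> BB a" "V \<subseteq> U" using BB(4)[OF UU] by blast
    obtain N where "\<beta> a N = V" unfolding \<beta>_def using from_nat_into_surj[OF BB(1) V(1)] by blast
    have "\<gamma> a n \<subseteq> U" if "n \<ge> N" for n
    proof -
      have "\<Inter> (\<beta> a ` {..n}) \<subseteq> \<beta> a N" using that by (intro INF_lower) simp
      then show ?thesis using V \<open>\<beta> a N = V\<close> unfolding \<gamma>_def by blast
    qed
    then show ?thesis by blast
  qed
  define Wb where "Wb S n = Pi UNIV (\<lambda>a. if a \<in> S then \<gamma> a n else topspace X)" for S n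
  have Wbbox: "box X (\<lambda>a. if a \<in> S then \<gamma> a n else topspace X)" if "finite S" for S n
  proof -
    have "{a. (if a \<in> S then \<gamma> a n else topspace X) \<noteq> topspace X} \<subseteq> S" by auto
    then show ?thesis unfolding box_def using that \<gamma>open finite_subset by (simp add: finite_subset)
  qed
  have Wbz: "z \<in> Wb S n" for S n unfolding Wb_def by (simp add: \<gamma>z za)
  have bad: "\<exists>qp. fst qp \<in> Y \<and> fst qp \<in> Wb S n \<and> snd qp \<in> Y \<and> snd qp \<in> Wb S n \<and>
                   \<bar>\<phi> (fst qp) - \<phi> (snd qp)\<bar> > e" if "finite S" for S n
  proof -
    have "openin XG (Wb S n)" unfolding Wb_def using box_open[OF Wbbox[OF that]] .
    then have "\<exists>q\<in>Y\<inter>Wb S n. \<exists>q'\<in>Y\<inter>Wb S n. \<not> \<bar>\<phi> q - \<phi> q'\<bar> \<le> e"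
      using nW Wbz by blast
    then obtain q q' where "q \<in> Y \<inter> Wb S n" "q' \<in> Y \<inter> Wb S n" "\<bar>\<phi> q - \<phi> q'\<bar> > e"
      by force
    then show ?thesis by (intro exI[of _ "(q, q')"]) auto
  qed
  define qp where "qp S n = (SOME qp. fst qp \<in> Y \<and> fst qp \<in> Wb S n \<and> snd qp \<in> Y \<and> snd qp \<in> Wb S n \<and>
                   \<bar>\<phi> (fst qp) - \<phi> (snd qp)\<bar> > e)" for S n
  have qp: "fst (qp S n) \<in> Y" "fst (qp S n) \<in> Wb S n" "snd (qp S n) \<in> Y" "snd (qp S n) \<in> Wb S n"
     "\<bar>\<phi> (fst (qp S n)) - \<phi> (snd (qp S n))\<bar> > e" if "finite S" for S n
    using someI_ex[OF bad[OF that, of n]] unfolding qp_def by blast+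
  define supp where "supp T = {a. T a \<noteq> topspace X}" for T :: "'g \<Rightarrow> 'a set"
  define step where "step n S = S \<union> supp (TB (e/4) (fst (qp S n))) \<union> supp (TB (e/4) (snd (qp S n)))" for n S
  define Ss where "Ss n = rec_nat {} step n" for n
  have Ss0: "Ss 0 = {}" and SsS: "Ss (Suc n) = step n (Ss n)" for n unfolding Ss_def by simp_all
  have e4: "e/4 > 0" using e by simp
  have finSs: "finite (Ss n)" for n
  proof (induction n)
    case 0 then show ?case using Ss0 by simp
  next
    case (Suc n)
    have "finite (supp (TB (e/4) (fst (qp (Ss n) n))))" "finite (supp (TB (e/4) (snd (qp (Ss n) n))))"
      using TB(1)[OF qp(1)[OF Suc] e4] TB(1)[OF qp(3)[OF Suc] e4] unfolding box_def supp_def by auto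
    then show ?case using Suc SsS step_def by simp
  qed
  have Ssmono: "Ss n \<subseteq> Ss (Suc n)" for n using SsS step_def by auto
  define M where "M = (\<Union>n. Ss n)"
  have cM: "countable M" unfolding M_def using finSs by (simp add: countable_finite)
  obtain w where w: "w \<in> Y" "\<forall>a\<in>M. w a = z a" using realize[OF cM, of z] za by blast
  obtain B where B: "box X B" "w \<in> Pi UNIV B" "\<And>u. u \<in> Y \<Longrightarrow> u \<in> Pi UNIV B \<Longrightarrow> \<bar>\<phi> u - \<phi> w\<bar> < e/4"
    using cont_box[OF w(1) e4] by blast
  define A where "A = supp B \<inter> M"
  have finA: "finite A" using B(1) unfolding A_def supp_def box_def by simp
  have "A \<subseteq> (\<Union>n. Ss n)" unfolding A_def M_def by blast
  then obtain k where k: "A \<subseteq> Ss k"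
    using finite_subset_mono_Union[of A Ss] finA Ssmono by blast
  have "\<exists>N. \<forall>n\<ge>N. \<gamma> a n \<subseteq> B a" if "a \<in> A" for a
  proof -
    have "a \<in> M" using that A_def by blast
    then have "w a = z a" using w by blast
    moreover have "w a \<in> B a" using B(2) by blast
    ultimately have "z a \<in> B a" by simp
    then show ?thesis using \<gamma>base B(1) unfolding box_def by blast
  qed
  define Nf where "Nf a = (SOME N. \<forall>n\<ge>N. \<gamma> a n \<subseteq> B a)" for a
  have Nf: "\<gamma> a n \<subseteq> B a" if "a \<in> A" "n \<ge> Nf a" for a n
    using someI_ex[OF \<open>\<And>a. a \<in> A \<Longrightarrow> \<exists>N. \<forall>n\<ge>N. \<gamma> a n \<subseteq> B a\<close>[OF that(1)]] that(2)
    unfolding Nf_def by blast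
  define n0 where "n0 = k + (\<Sum>a\<in>A. Nf a)"
  have n0k: "Ss k \<subseteq> Ss n0" unfolding n0_def using lift_Suc_mono_le[of Ss, OF Ssmono] by simp
  have n0N: "Nf a \<le> n0" if "a \<in> A" for a
    unfolding n0_def using member_le_sum[OF that, of Nf, OF _ finA] by simp
  have key: "\<bar>\<phi> q - \<phi> w\<bar> < e/2"
    if q: "q \<in> Y" "q \<in> Wb (Ss n0) n0" and sp: "supp (TB (e/4) q) \<subseteq> Ss (Suc n0)" for q
  proof -
    have qB: "q a \<in> B a" if "a \<in> Ss (Suc n0)" "B a \<noteq> topspace X" for a
    proof -
      have aA: "a \<in> A" using that unfolding A_def supp_def M_def by blast
      then have "a \<in> Ss n0" using k n0k by blast
      moreover have "q a \<in> (if a \<in> Ss n0 then \<gamma> a n0 else topspace X)"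
        using q(2) unfolding Wb_def by blast
      ultimately have "q a \<in> \<gamma> a n0" by simp
      then show ?thesis using Nf[OF aA n0N[OF aA]] by blast
    qed
    have cS: "countable (Ss (Suc n0))" using finSs by (simp add: countable_finite)
    have sp': "{a. TB (e/4) q a \<noteq> topspace X} \<subseteq> Ss (Suc n0)" using sp unfolding supp_def .
    obtain u where u: "u \<in> Y" "u \<in> Pi UNIV (TB (e/4) q)" "u \<in> Pi UNIV B"
      using glue[OF TB(1)[OF q(1) e4] B(1) q(1) TB(2)[OF q(1) e4] w(1) B(2) cS sp' qB] by blast
    have "\<bar>\<phi> u - \<phi> q\<bar> < e/4" using TB(3)[OF q(1) e4 u(1,2)] .
    moreover have "\<bar>\<phi> u - \<phi> w\<bar> < e/4" using B(3) u by blast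
    ultimately show ?thesis by linarith
  qed
  let ?S = "Ss n0"
  have sp1: "supp (TB (e/4) (fst (qp ?S n0))) \<subseteq> Ss (Suc n0)" using SsS step_def by auto
  have sp2: "supp (TB (e/4) (snd (qp ?S n0))) \<subseteq> Ss (Suc n0)" using SsS step_def by auto
  have "\<bar>\<phi> (fst (qp ?S n0)) - \<phi> w\<bar> < e/2" using key qp[OF finSs] sp1 by blast
  moreover have "\<bar>\<phi> (snd (qp ?S n0)) - \<phi> w\<bar> < e/2" using key qp[OF finSs] sp2 by blast
  moreover have "\<bar>\<phi> (fst (qp ?S n0)) - \<phi> (snd (qp ?S n0))\<bar> > e" using qp(5)[OF finSs] .
  ultimately show False by linarith
qed

end


lemma boxI:
  assumes "finite S" "\<And>a. openin X (V a)" "\<And>a. V a \<noteq> topspace X \<Longrightarrow> a \<in> S"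
  shows "box X V"
proof -
  have "{a. V a \<noteq> topspace X} \<subseteq> S" using assms(3) by blast
  then show ?thesis unfolding box_def using assms(1,2) finite_subset by blast
qed

lemma box_supp_fin: "box X T \<Longrightarrow> finite {a. T a \<noteq> topspace X}"
  unfolding box_def by blast

lemma box_openin: "box X T \<Longrightarrow> openin X (T a)"
  unfolding box_def by blast

context KORPHI begin

lemma dep_osc:
  assumes cM: "countable M"
    and dep: "\<And>q q'. q \<in> Y \<Longrightarrow> q' \<in> Y \<Longrightarrow> (\<forall>a\<in>M. q a = q' a) \<Longrightarrow> \<bar>\<phi> q - \<phi> q'\<bar> \<le> e"
    and z: "z \<in> topspace XG" and e: "e > 0"
  shows "\<exists>W. openin XG W \<and> z \<in> W \<and> (\<forall>q\<in>Y\<inter>W. \<forall>q'\<in>Y\<inter>W. \<bar>\<phi> q - \<phi> q'\<bar> \<le> 4 * e)"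
proof -
  have za: "z a \<in> topspace X" for a using z by (auto simp: PiE_UNIV_domain)
  obtain w where w: "w \<in> Y" "\<forall>a\<in>M. w a = z a" using realize[OF cM, of z] za by blast
  let ?B = "TB e w"
  note B = TB[OF w(1) e]
  define B' where "B' a = (if a \<in> M then ?B a else topspace X)" for a
  have bB': "box X B'"
  proof (rule boxI[OF box_supp_fin[OF B(1)]])
    fix a show "openin X (B' a)" unfolding B'_def using box_openin[OF B(1)] by simp
    assume "B' a \<noteq> topspace X"
    then show "a \<in> {a. ?B a \<noteq> topspace X}" unfolding B'_def by (cases "a \<in> M") simp_all
  qed
  have zW: "z \<in> Pi UNIV B'"
  proof
    fix a show "z a \<in> B' a"
    proof (cases "a \<in> M")
      case True
      then have "w a = z a" using w by blast
      moreover have "w a \<in> ?B a" using B(2) by blast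
      ultimately show ?thesis using True unfolding B'_def by simp
    qed (simp add: B'_def za)
  qed
  have tb: "box X (\<lambda>_. topspace X)" unfolding box_def by simp
  have near: "\<bar>\<phi> q - \<phi> w\<bar> < 2 * e" if q: "q \<in> Y" "q \<in> Pi UNIV B'" for q
  proof -
    have qB: "q a \<in> ?B a" if "a \<in> M" "?B a \<noteq> topspace X" for a
    proof -
      have "q a \<in> B' a" using q(2) by blast
      then show ?thesis using that unfolding B'_def by simp
    qed
    have qT: "q \<in> Pi UNIV (\<lambda>_. topspace X)" using Y_top[OF q(1)] by blast
    obtain u where u: "u \<in> Y" "u \<in> Pi UNIV ?B" "\<forall>a\<in>M. u a = q a"
      using glue[OF tb B(1) q(1) qT w(1) B(2) cM _ qB] by auto
    have "\<bar>\<phi> u - \<phi> w\<bar> < e" using B(3) u by blast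
    moreover have "\<bar>\<phi> u - \<phi> q\<bar> \<le> e" using dep[OF u(1) q(1)] u(3) by blast
    ultimately show ?thesis by linarith
  qed
  show ?thesis
  proof (intro exI conjI ballI)
    show "openin XG (Pi UNIV B')" using box_open[OF bB'] .
    show "z \<in> Pi UNIV B'" using zW .
    fix q q' assume qq: "q \<in> Y \<inter> Pi UNIV B'" "q' \<in> Y \<inter> Pi UNIV B'"
    have "\<bar>\<phi> q - \<phi> w\<bar> < 2 * e" using near qq(1) by blast
    moreover have "\<bar>\<phi> q' - \<phi> w\<bar> < 2 * e" using near qq(2) by blast
    ultimately show "\<bar>\<phi> q - \<phi> q'\<bar> \<le> 4 * e" by linarith
  qed
qed

end


context KORPHI begin

definition nbox :: "('g \<Rightarrow> 'a set) \<Rightarrow> bool" where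
  "nbox V \<longleftrightarrow> box X V \<and> (\<forall>a. V a \<noteq> {})"

definition BP :: "real \<Rightarrow> 'g set \<Rightarrow> ('g \<Rightarrow> 'a set) \<times> ('g \<Rightarrow> 'a set) \<Rightarrow> bool" where
  "BP e M P \<longleftrightarrow> nbox (fst P) \<and> nbox (snd P) \<and> (\<forall>a\<in>M. fst P a = snd P a) \<and>
     (\<forall>u\<in>Y. \<forall>u'\<in>Y. u \<in> Pi UNIV (fst P) \<longrightarrow> u' \<in> Pi UNIV (snd P) \<longrightarrow> e/2 < \<bar>\<phi> u - \<phi> u'\<bar>)"

definition sp :: "('g \<Rightarrow> 'a set) \<times> ('g \<Rightarrow> 'a set) \<Rightarrow> 'g set" where
  "sp P = {a. fst P a \<noteq> topspace X} \<union> {a. snd P a \<noteq> topspace X}"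

lemma sp_fin: "BP e M P \<Longrightarrow> finite (sp P)"
  unfolding BP_def nbox_def sp_def box_def by simp

lemma BP_mono: "BP e M P \<Longrightarrow> M' \<subseteq> M \<Longrightarrow> BP e M' P"
  unfolding BP_def by blast

lemma nbox_meets_Y:
  assumes "nbox V" shows "\<exists>u\<in>Y. u \<in> Pi UNIV V"
proof -
  have "(\<lambda>a. SOME x. x \<in> V a) \<in> Pi UNIV V"
    using assms unfolding nbox_def by (simp add: some_in_eq)
  then show ?thesis using box_meets_Y assms unfolding nbox_def by blast
qed

lemma BP_ex:
  assumes e: "e > 0" and cM: "countable M"
    and H: "\<exists>q\<in>Y. \<exists>q'\<in>Y. (\<forall>a\<in>M. q a = q' a) \<and> e < \<bar>\<phi> q - \<phi> q'\<bar>"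
  shows "\<exists>P. BP e M P"
proof -
  obtain q q' where q: "q \<in> Y" "q' \<in> Y" "\<forall>a\<in>M. q a = q' a" "e < \<bar>\<phi> q - \<phi> q'\<bar>"
    using H by blast
  have e4: "e/4 > 0" using e by simp
  note T = TB[OF q(1) e4] and T' = TB[OF q(2) e4]
  let ?T = "TB (e/4) q" and ?T' = "TB (e/4) q'"
  define V where "V a = (if a \<in> M then ?T a \<inter> ?T' a else ?T a)" for a
  define V' where "V' a = (if a \<in> M then ?T a \<inter> ?T' a else ?T' a)" for a
  have fin: "finite ({a. ?T a \<noteq> topspace X} \<union> {a. ?T' a \<noteq> topspace X})"
    using box_supp_fin[OF T(1)] box_supp_fin[OF T'(1)] by simp
  have qV: "q \<in> Pi UNIV V"
  proof
    fix a
    have "q a \<in> ?T a" "q' a \<in> ?T' a" using T(2) T'(2) by blast+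
    then show "q a \<in> V a" using q(3) unfolding V_def by (cases "a \<in> M") auto
  qed
  have qV': "q' \<in> Pi UNIV V'"
  proof
    fix a
    have "q a \<in> ?T a" "q' a \<in> ?T' a" using T(2) T'(2) by blast+
    then show "q' a \<in> V' a" using q(3) unfolding V'_def by (cases "a \<in> M") auto
  qed
  have bV: "box X V"
  proof (rule boxI[OF fin])
    fix a show "openin X (V a)" unfolding V_def
      using box_openin[OF T(1)] box_openin[OF T'(1)] by (simp add: openin_Int)
    assume "V a \<noteq> topspace X"
    then show "a \<in> {a. ?T a \<noteq> topspace X} \<union> {a. ?T' a \<noteq> topspace X}"
      unfolding V_def by (cases "a \<in> M") auto
  qed
  have bV': "box X V'"
  proof (rule boxI[OF fin])
    fix a show "openin X (V' a)" unfolding V'_def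
      using box_openin[OF T(1)] box_openin[OF T'(1)] by (simp add: openin_Int)
    assume "V' a \<noteq> topspace X"
    then show "a \<in> {a. ?T a \<noteq> topspace X} \<union> {a. ?T' a \<noteq> topspace X}"
      unfolding V'_def by (cases "a \<in> M") auto
  qed
  have "BP e M (V, V')"
    unfolding BP_def fst_conv snd_conv
  proof (intro conjI ballI impI)
    show "nbox V" unfolding nbox_def using bV qV by blast
    show "nbox V'" unfolding nbox_def using bV' qV' by blast
    fix a assume "a \<in> M" then show "V a = V' a" unfolding V_def V'_def by simp
  next
    fix u u' assume u: "u \<in> Y" "u' \<in> Y" "u \<in> Pi UNIV V" "u' \<in> Pi UNIV V'"
    have "u \<in> Pi UNIV ?T"
    proof
      fix a have "u a \<in> V a" using u(3) by blast
      then show "u a \<in> ?T a" unfolding V_def by (cases "a \<in> M") auto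
    qed
    then have 1: "\<bar>\<phi> u - \<phi> q\<bar> < e/4" using T(3) u(1) by blast
    have "u' \<in> Pi UNIV ?T'"
    proof
      fix a have "u' a \<in> V' a" using u(4) by blast
      then show "u' a \<in> ?T' a" unfolding V'_def by (cases "a \<in> M") auto
    qed
    then have 2: "\<bar>\<phi> u' - \<phi> q'\<bar> < e/4" using T'(3) u(2) by blast
    show "e/2 < \<bar>\<phi> u - \<phi> u'\<bar>" using 1 2 q(4) by linarith
  qed
  then show ?thesis by blast
qed

end


context KORPHI begin

lemma R_exists:
  assumes BPall: "\<And>M. countable M \<Longrightarrow> \<exists>P. BP e M P"
  shows "\<exists>R. countable R \<and> (\<forall>M. countable M \<and> R \<subseteq> M \<longrightarrow> (\<exists>P. BP e M P \<and> sp P \<inter> M \<subseteq> R))"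
proof (rule ccontr)
  assume nt: "\<not> ?thesis"
  have H: "\<exists>M. countable M \<and> R \<subseteq> M \<and> (\<forall>P. BP e M P \<longrightarrow> \<not> sp P \<inter> M \<subseteq> R)"
    if cR: "countable R" for R
  proof -
    have "\<not> (\<forall>M. countable M \<and> R \<subseteq> M \<longrightarrow> (\<exists>P. BP e M P \<and> sp P \<inter> M \<subseteq> R))"
    proof
      assume "\<forall>M. countable M \<and> R \<subseteq> M \<longrightarrow> (\<exists>P. BP e M P \<and> sp P \<inter> M \<subseteq> R)"
      with cR nt show False by blast
    qed
    then show ?thesis by (simp add: not_all)
  qed
  define Mf where "Mf R = (SOME M. countable M \<and> R \<subseteq> M \<and> (\<forall>P. BP e M P \<longrightarrow> \<not> sp P \<inter> M \<subseteq> R))" for R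
  have Mf: "countable (Mf R) \<and> R \<subseteq> Mf R \<and> (\<forall>P. BP e (Mf R) P \<longrightarrow> \<not> sp P \<inter> Mf R \<subseteq> R)"
    if "countable R" for R
    unfolding Mf_def by (rule someI_ex[OF H[OF that]])
  define Rs where "Rs n = rec_nat {} (\<lambda>_ R. Mf R) n" for n
  have Rs0: "Rs 0 = {}" and RsS: "Rs (Suc n) = Mf (Rs n)" for n unfolding Rs_def by simp_all
  have cRs: "countable (Rs n)" for n
  proof (induction n)
    case 0 show ?case by (simp add: Rs0)
  next
    case (Suc n) show ?case unfolding RsS using Mf[OF Suc] by blast
  qed
  have Rsmono: "Rs n \<subseteq> Rs (Suc n)" for n unfolding RsS using Mf[OF cRs[of n]] by blast
  define Rw where "Rw = (\<Union>n. Rs n)"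
  have cRw: "countable Rw" unfolding Rw_def using cRs by blast
  obtain P where P: "BP e Rw P" using BPall[OF cRw] by blast
  have "finite (sp P \<inter> Rw)" using sp_fin[OF P] by simp
  moreover have "sp P \<inter> Rw \<subseteq> (\<Union>n. Rs n)" unfolding Rw_def by blast
  ultimately obtain k where k: "sp P \<inter> Rw \<subseteq> Rs k"
    using finite_subset_mono_Union[of "sp P \<inter> Rw" Rs] Rsmono by blast
  have "Rs (Suc k) \<subseteq> Rw" unfolding Rw_def by blast
  then have "BP e (Rs (Suc k)) P" using BP_mono[OF P] by blast
  then have "\<not> sp P \<inter> Rs (Suc k) \<subseteq> Rs k" using Mf[OF cRs[of k]] unfolding RsS by blast
  moreover have "sp P \<inter> Rs (Suc k) \<subseteq> Rs k" using k \<open>Rs (Suc k) \<subseteq> Rw\<close> by blast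
  ultimately show False by blast
qed

end


context KORPHI begin

lemma hp:
  assumes V: "nbox V" and T: "box X T" and w: "w \<in> Y" "w \<in> Pi UNIV T"
    and sR: "\<And>a. a \<in> R \<Longrightarrow> s a \<in> V a \<inter> T a"
    and out: "\<And>a. a \<notin> R \<Longrightarrow> V a \<noteq> topspace X \<Longrightarrow> T a = topspace X"
  shows "\<exists>u\<in>Y. u \<in> Pi UNIV T \<and> u \<in> Pi UNIV V"
proof -
  have bV: "box X V" and Vne: "\<And>a. V a \<noteq> {}" using V unfolding nbox_def by blast+
  have fin: "finite ({a. T a \<noteq> topspace X} \<union> {a. V a \<noteq> topspace X})"
    using box_supp_fin[OF T] box_supp_fin[OF bV] by simp
  have bTV: "box X (\<lambda>a. T a \<inter> V a)"
  proof (rule boxI[OF fin])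
    fix a show "openin X (T a \<inter> V a)" using box_openin[OF T] box_openin[OF bV] by (simp add: openin_Int)
    assume "T a \<inter> V a \<noteq> topspace X"
    then show "a \<in> {a. T a \<noteq> topspace X} \<union> {a. V a \<noteq> topspace X}" by auto
  qed
  define b where "b a = (if a \<in> R then s a else if V a \<noteq> topspace X then (SOME x. x \<in> V a) else w a)" for a
  have "b \<in> Pi UNIV (\<lambda>a. T a \<inter> V a)"
  proof
    fix a show "b a \<in> T a \<inter> V a"
    proof (cases "a \<in> R")
      case True then show ?thesis using sR unfolding b_def by simp
    next
      case False
      show ?thesis
      proof (cases "V a = topspace X")
        case True
        have "w a \<in> T a" using w(2) by blast
        moreover have "w a \<in> topspace X" using Y_top[OF w(1)] .
        ultimately show ?thesis using False True unfolding b_def by simp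
      next
        case Vn: False
        have "(SOME x. x \<in> V a) \<in> V a" using Vne[of a] by (simp add: some_in_eq)
        moreover have "V a \<subseteq> topspace X" using box_openin[OF bV] openin_subset by blast
        ultimately show ?thesis using False Vn out[OF False Vn] unfolding b_def by auto
      qed
    qed
  qed
  then obtain u where "u \<in> Y" "u \<in> Pi UNIV (\<lambda>a. T a \<inter> V a)" using box_meets_Y[OF bTV] by blast
  then show ?thesis by blast
qed

end


context KORPHI begin

lemma dep_exists:
  assumes pa: "pseudo_aleph1_compact (product_topology (\<lambda>_::nat. X) UNIV)"
    and inf: "infinite (UNIV::'g set)" and e: "e > 0"
  shows "\<exists>M. countable M \<and> (\<forall>q\<in>Y. \<forall>q'\<in>Y. (\<forall>a\<in>M. q a = q' a) \<longrightarrow> \<bar>\<phi> q - \<phi> q'\<bar> \<le> e)"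
proof (rule ccontr)
  assume nt: "\<not> ?thesis"
  have BPall: "\<exists>P. BP e M P" if cM: "countable M" for M
  proof -
    have "\<not> (\<forall>q\<in>Y. \<forall>q'\<in>Y. (\<forall>a\<in>M. q a = q' a) \<longrightarrow> \<bar>\<phi> q - \<phi> q'\<bar> \<le> e)"
      using nt cM by blast
    then have "\<exists>q\<in>Y. \<exists>q'\<in>Y. (\<forall>a\<in>M. q a = q' a) \<and> e < \<bar>\<phi> q - \<phi> q'\<bar>"
      by (auto simp: not_le)
    then show ?thesis using BP_ex[OF e cM] by blast
  qed
  obtain R0 where R0: "countable R0" "\<And>M. countable M \<Longrightarrow> R0 \<subseteq> M \<Longrightarrow> \<exists>P. BP e M P \<and> sp P \<inter> M \<subseteq> R0"
    using R_exists[OF BPall] by blast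
  obtain e0 :: "nat \<Rightarrow> 'g" where e0: "inj e0" using infinite_countable_subset[OF inf] by blast
  define R where "R = R0 \<union> range e0"
  have cR: "countable R" unfolding R_def using R0(1) by simp
  have iR: "infinite R" unfolding R_def using e0 range_inj_infinite by blast
  have RP: "\<exists>P. BP e M P \<and> sp P \<inter> M \<subseteq> R" if "countable M" "R \<subseteq> M" for M
  proof -
    have "R0 \<subseteq> M" using that R_def by blast
    then show ?thesis using R0(2)[OF that(1)] R_def by blast
  qed
  define en where "en = from_nat_into R"
  have bij: "bij_betw en UNIV R" unfolding en_def using bij_betw_from_nat_into[OF cR iR] .
  have inj: "inj en" and enR: "\<And>n. en n \<in> R" using bij by (auto simp: bij_betw_def)
  have enI: "en (inv_into UNIV en a) = a" if "a \<in> R" for a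
    using bij that by (metis bij_betw_imp_surj_on f_inv_into_f)
  have Ien: "inv_into UNIV en (en n) = n" for n using inj by simp
  define AA where "AA = {PP. (\<forall>P\<in>PP. BP e R P) \<and> (\<forall>P\<in>PP. \<forall>P'\<in>PP. P \<noteq> P' \<longrightarrow> (sp P - R) \<inter> (sp P' - R) = {})}"
  have "\<forall>C\<in>chains AA. \<Union>C \<in> AA"
  proof
    fix C assume C: "C \<in> chains AA"
    have CA: "C \<subseteq> AA" using chainsD2[OF C] .
    show "\<Union>C \<in> AA" unfolding AA_def
    proof (intro CollectI conjI ballI impI)
      fix P assume "P \<in> \<Union>C"
      then obtain PP where "PP \<in> C" "P \<in> PP" by blast
      then show "BP e R P" using CA unfolding AA_def by blast
    next
      fix P P' assume P: "P \<in> \<Union>C" and P': "P' \<in> \<Union>C" and ne: "P \<noteq> P'"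
      then obtain PP PP' where PP: "PP \<in> C" "P \<in> PP" and PP': "PP' \<in> C" "P' \<in> PP'" by blast
      from chainsD[OF C PP(1) PP'(1)] show "(sp P - R) \<inter> (sp P' - R) = {}"
      proof
        assume "PP \<subseteq> PP'"
        then show ?thesis using CA PP PP' ne unfolding AA_def by blast
      next
        assume "PP' \<subseteq> PP"
        then show ?thesis using CA PP PP' ne unfolding AA_def by blast
      qed
    qed
  qed
  from Zorn_Lemma[OF this] obtain PP where PP: "PP \<in> AA" and maxPP: "\<And>QQ. QQ \<in> AA \<Longrightarrow> PP \<subseteq> QQ \<Longrightarrow> QQ = PP"
    by blast
  have PPBP: "\<And>P. P \<in> PP \<Longrightarrow> BP e R P" using PP unfolding AA_def by blast
  have PPdis: "\<And>P P'. P \<in> PP \<Longrightarrow> P' \<in> PP \<Longrightarrow> P \<noteq> P' \<Longrightarrow> (sp P - R) \<inter> (sp P' - R) = {}"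
    using PP unfolding AA_def by blast
  have unc: "\<not> countable PP"
  proof
    assume cPP: "countable PP"
    define M where "M = R \<union> \<Union> (sp ` PP)"
    have cM: "countable M" unfolding M_def using cR cPP sp_fin[OF PPBP]
      by (simp add: countable_finite)
    obtain P0 where P0: "BP e M P0" "sp P0 \<inter> M \<subseteq> R" using RP[OF cM] M_def by blast
    have "insert P0 PP \<in> AA" unfolding AA_def
    proof (intro CollectI conjI ballI impI)
      fix P assume "P \<in> insert P0 PP"
      then show "BP e R P" using PPBP BP_mono[OF P0(1)] M_def by blast
    next
      fix P P' assume P: "P \<in> insert P0 PP" and P': "P' \<in> insert P0 PP" and ne: "P \<noteq> P'"
      have new: "(sp P0 - R) \<inter> (sp Q - R) = {}" if "Q \<in> PP" for Q
      proof -
        have "sp Q \<subseteq> M" using that M_def by blast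
        then show ?thesis using P0(2) by blast
      qed
      show "(sp P - R) \<inter> (sp P' - R) = {}"
        using P P' ne new PPdis by blast
    qed
    then have "insert P0 PP = PP" using maxPP by blast
    then have "P0 \<in> PP" by blast
    then have "sp P0 \<subseteq> M" using M_def by blast
    then have spR: "sp P0 \<subseteq> R" using P0(2) by blast
    have eq: "fst P0 = snd P0"
    proof
      fix a show "fst P0 a = snd P0 a"
      proof (cases "a \<in> R")
        case True then show ?thesis using P0(1) unfolding BP_def M_def by blast
      next
        case False then have "a \<notin> sp P0" using spR by blast
        then show ?thesis unfolding sp_def by simp
      qed
    qed
    obtain u where u: "u \<in> Y" "u \<in> Pi UNIV (fst P0)"
      using nbox_meets_Y P0(1) unfolding BP_def by blast
    have "e/2 < \<bar>\<phi> u - \<phi> u\<bar>" using P0(1) u eq unfolding BP_def by metis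
    then show False using e by simp
  qed
  let ?XN = "product_topology (\<lambda>_::nat. X) UNIV"
  define Q where "Q P = Pi UNIV (\<lambda>n. fst P (en n))" for P :: "('g \<Rightarrow> 'a set) \<times> ('g \<Rightarrow> 'a set)"
  have Qopen: "openin ?XN (Q P)" if "P \<in> PP" for P
  proof -
    have bP: "box X (fst P)" using PPBP[OF that] unfolding BP_def nbox_def by blast
    have "finite (en -` {a. fst P a \<noteq> topspace X})"
      using finite_vimageI[OF box_supp_fin[OF bP] inj] .
    then have "finite {n. fst P (en n) \<noteq> topspace X}" by (simp add: vimage_def)
    then show ?thesis unfolding Q_def
      by (simp add: openin_PiE_gen box_openin[OF bP] flip: PiE_UNIV_domain)
  qed
  have Qne: "Q P \<noteq> {}" if "P \<in> PP" for P
  proof -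
    have "(\<lambda>n. SOME x. x \<in> fst P (en n)) \<in> Q P"
      using PPBP[OF that] unfolding BP_def nbox_def Q_def by (simp add: some_in_eq)
    then show ?thesis by blast
  qed
  have LF: "\<exists>N. openin ?XN N \<and> s \<in> N \<and> finite {P\<in>PP. Q P \<inter> N \<noteq> {}}"
    if s: "s \<in> topspace ?XN" for s
  proof -
    have sn: "s n \<in> topspace X" for n using s by (auto simp: PiE_UNIV_domain)
    obtain w where w: "w \<in> Y" "\<forall>a\<in>R. w a = s (inv_into UNIV en a)"
      using realize[OF cR, of "\<lambda>a. s (inv_into UNIV en a)"] sn by blast
    have wen: "w (en n) = s n" for n using w(2) enR[of n] Ien[of n] by simp
    have e4: "e/4 > 0" using e by simp
    let ?T = "TB (e/4) w"
    note T = TB[OF w(1) e4]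
    define N where "N = Pi UNIV (\<lambda>n. ?T (en n))"
    have "finite (en -` {a. ?T a \<noteq> topspace X})"
      using finite_vimageI[OF box_supp_fin[OF T(1)] inj] .
    then have "finite {n. ?T (en n) \<noteq> topspace X}" by (simp add: vimage_def)
    then have Nopen: "openin ?XN N" unfolding N_def
      by (simp add: openin_PiE_gen box_openin[OF T(1)] flip: PiE_UNIV_domain)
    have sN: "s \<in> N" unfolding N_def
    proof
      fix n have "w (en n) \<in> ?T (en n)" using T(2) by blast
      then show "s n \<in> ?T (en n)" using wen by simp
    qed
    have sub: "{P\<in>PP. Q P \<inter> N \<noteq> {}} \<subseteq> (\<Union>a\<in>{a. ?T a \<noteq> topspace X}. {P\<in>PP. a \<in> sp P - R})"
    proof
      fix P assume "P \<in> {P\<in>PP. Q P \<inter> N \<noteq> {}}"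
      then have P: "P \<in> PP" "Q P \<inter> N \<noteq> {}" by auto
      then obtain s' where s': "s' \<in> Q P" "s' \<in> N" by blast
      show "P \<in> (\<Union>a\<in>{a. ?T a \<noteq> topspace X}. {P\<in>PP. a \<in> sp P - R})"
      proof (rule ccontr)
        assume "\<not> ?thesis"
        then have out: "\<And>a. a \<notin> R \<Longrightarrow> a \<in> sp P \<Longrightarrow> ?T a = topspace X" using P(1) by blast
        have BPP: "BP e R P" using PPBP[OF P(1)] .
        define s2 where "s2 a = s' (inv_into UNIV en a)" for a
        have s2f: "s2 a \<in> fst P a \<inter> ?T a" if "a \<in> R" for a
        proof -
          have "s' (inv_into UNIV en a) \<in> fst P (en (inv_into UNIV en a))" using s'(1) unfolding Q_def by blast
          moreover have "s' (inv_into UNIV en a) \<in> ?T (en (inv_into UNIV en a))" using s'(2) unfolding N_def by blast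
          ultimately show ?thesis unfolding s2_def using enI[OF that] by simp
        qed
        have s2s: "s2 a \<in> snd P a \<inter> ?T a" if "a \<in> R" for a
          using s2f[OF that] BPP that unfolding BP_def by metis
        obtain u where u: "u \<in> Y" "u \<in> Pi UNIV ?T" "u \<in> Pi UNIV (fst P)"
        proof -
          have "nbox (fst P)" using BPP unfolding BP_def by blast
          moreover have "\<And>a. a \<notin> R \<Longrightarrow> fst P a \<noteq> topspace X \<Longrightarrow> ?T a = topspace X"
            using out unfolding sp_def by blast
          ultimately show ?thesis using hp[OF _ T(1) w(1) T(2) s2f] that by blast
        qed
        obtain u' where u': "u' \<in> Y" "u' \<in> Pi UNIV ?T" "u' \<in> Pi UNIV (snd P)"
        proof -
          have "nbox (snd P)" using BPP unfolding BP_def by blast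
          moreover have "\<And>a. a \<notin> R \<Longrightarrow> snd P a \<noteq> topspace X \<Longrightarrow> ?T a = topspace X"
            using out unfolding sp_def by blast
          ultimately show ?thesis using hp[OF _ T(1) w(1) T(2) s2s] that by blast
        qed
        have "\<bar>\<phi> u - \<phi> w\<bar> < e/4" using T(3) u by blast
        moreover have "\<bar>\<phi> u' - \<phi> w\<bar> < e/4" using T(3) u' by blast
        moreover have "e/2 < \<bar>\<phi> u - \<phi> u'\<bar>" using BPP u u' unfolding BP_def by blast
        ultimately show False by linarith
      qed
    qed
    have "finite {P\<in>PP. a \<in> sp P - R}" for a
    proof (cases "{P\<in>PP. a \<in> sp P - R} = {}")
      case False
      then obtain P0 where P0: "P0 \<in> PP" "a \<in> sp P0 - R" by blast
      have "{P\<in>PP. a \<in> sp P - R} \<subseteq> {P0}" using PPdis[OF P0(1)] P0(2) by blast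
      then show ?thesis using finite_subset by blast
    next
      case True then show ?thesis by (metis finite.emptyI)
    qed
    then have "finite (\<Union>a\<in>{a. ?T a \<noteq> topspace X}. {P\<in>PP. a \<in> sp P - R})"
      using box_supp_fin[OF T(1)] by blast
    then have "finite {P\<in>PP. Q P \<inter> N \<noteq> {}}" using sub finite_subset by blast
    then show ?thesis using Nopen sN by blast
  qed
  have "locally_finite_in ?XN (Q ` PP)"
    unfolding locally_finite_in_def
  proof
    fix s assume "s \<in> topspace ?XN"
    then obtain N where N: "openin ?XN N" "s \<in> N" "finite {P\<in>PP. Q P \<inter> N \<noteq> {}}" using LF by blast
    have "{A \<in> Q ` PP. A \<inter> N \<noteq> {}} \<subseteq> Q ` {P\<in>PP. Q P \<inter> N \<noteq> {}}" by blast
    then have "finite {A \<in> Q ` PP. A \<inter> N \<noteq> {}}" using N(3) finite_subset by blast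
    then show "\<exists>V. openin ?XN V \<and> s \<in> V \<and> finite {A \<in> Q ` PP. A \<inter> V \<noteq> {}}" using N by blast
  qed
  moreover have "\<forall>A\<in>Q ` PP. openin ?XN A" using Qopen by blast
  ultimately have cQ: "countable (Q ` PP)" using pa unfolding pseudo_aleph1_compact_def by blast
  have fibre: "finite {P\<in>PP. Q P = A}" if AQ: "A \<in> Q ` PP" for A
  proof -
    obtain P1 where P1: "P1 \<in> PP" "A = Q P1" using AQ by blast
    obtain s where s: "s \<in> A" using Qne[OF P1(1)] P1(2) by blast
    have "s \<in> topspace ?XN" using s P1 Qopen[OF P1(1)] openin_subset by blast
    then obtain N where N: "openin ?XN N" "s \<in> N" "finite {P\<in>PP. Q P \<inter> N \<noteq> {}}" using LF by blast
    have "{P\<in>PP. Q P = A} \<subseteq> {P\<in>PP. Q P \<inter> N \<noteq> {}}" using s N(2) by blast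
    then show ?thesis using N(3) finite_subset by blast
  qed
  have "PP \<subseteq> (\<Union>A\<in>Q ` PP. {P\<in>PP. Q P = A})" by blast
  moreover have "countable (\<Union>A\<in>Q ` PP. {P\<in>PP. Q P = A})"
    by (rule countable_UN[OF cQ]) (use fibre countable_finite in blast)
  ultimately have "countable PP" using countable_subset by blast
  then show False using unc by blast
qed

end


lemma sep_pa:
  assumes "separable_space X"
  shows "pseudo_aleph1_compact (product_topology (\<lambda>_::nat. X) UNIV)"
  unfolding pseudo_aleph1_compact_def
proof (intro allI impI)
  let ?XN = "product_topology (\<lambda>_::nat. X) UNIV"
  fix U assume U: "(\<forall>A\<in>U. openin ?XN A) \<and> locally_finite_in ?XN U"
  obtain D where D: "countable D" "D \<subseteq> topspace X" "X closure_of D = topspace X"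
    using assms unfolding separable_space_def by blast
  have dense: "D \<inter> V \<noteq> {}" if "openin X V" "V \<noteq> {}" for V
    using D(3) that unfolding dense_intersects_open by blast
  show "countable U"
  proof (cases "topspace X = {}")
    case True
    then have t0: "topspace ?XN = {}" by (simp add: PiE_eq_empty_iff)
    have "A = {}" if AU: "A \<in> U" for A
    proof -
      have "openin ?XN A" using U AU by blast
      then have "A \<subseteq> topspace ?XN" by (rule openin_subset)
      then show ?thesis using t0 by simp
    qed
    then have "U \<subseteq> {{}}" by blast
    then show ?thesis by (rule countable_subset) simp
  next
    case False
    have "D \<noteq> {}"
    proof
      assume "D = {}"
      then have "topspace X = {}" using D(3) by simp
      with False show False by simp
    qed
    then obtain d0 where d0: "d0 \<in> D" by blast
    define E where "E = (\<Union>k::nat. (\<lambda>t n. if n < k then t n else d0) ` PiE {..<k} (\<lambda>_. D))"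
    have cE: "countable E" unfolding E_def
    proof (rule countable_UN)
      show "countable (UNIV :: nat set)" by simp
      fix k :: nat
      show "countable ((\<lambda>t n. if n < k then t n else d0) ` PiE {..<k} (\<lambda>_. D))"
        by (intro countable_image countable_PiE finite_lessThan D(1))
    qed
    have Etop: "e \<in> topspace ?XN" if eE: "e \<in> E" for e
    proof -
      obtain k t where "t \<in> PiE {..<k} (\<lambda>_. D)" "e = (\<lambda>n. if n < k then t n else d0)"
        using eE unfolding E_def by blast
      then have "e n \<in> D" for n using d0 by auto
      then show ?thesis using D(2) by (auto simp: PiE_UNIV_domain)
    qed
    have hit: "\<exists>e\<in>E. e \<in> A" if A: "A \<in> U" "A \<noteq> {}" for A
    proof -
      obtain s where s: "s \<in> A" using A by blast
      obtain V where V: "s \<in> PiE UNIV V" "\<And>n. openin X (V n)" "finite {n. V n \<noteq> topspace X}" "PiE UNIV V \<subseteq> A"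
        using product_topology_open_contains_basis[of "\<lambda>_. X" UNIV A s] U A(1) s by auto
      obtain k where k: "{n. V n \<noteq> topspace X} \<subseteq> {..<k}" using finite_nat_bounded[OF V(3)] by blast
      have ex: "\<exists>x. x \<in> D \<inter> V n" for n
      proof -
        have "s n \<in> V n" using V(1) by auto
        then show ?thesis using dense[OF V(2)] by blast
      qed
      define t where "t = (\<lambda>n\<in>{..<k}. SOME x. x \<in> D \<inter> V n)"
      define e where "e = (\<lambda>n. if n < k then t n else d0)"
      have tD: "t \<in> PiE {..<k} (\<lambda>_. D)" unfolding t_def
        unfolding restrict_PiE_iff
      proof
        fix n show "(SOME x. x \<in> D \<inter> V n) \<in> D" using someI_ex[OF ex[of n]] by blast
      qed
      have "e \<in> E" unfolding E_def e_def using tD by blast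
      moreover have "e \<in> PiE UNIV V"
      proof -
        have "e n \<in> V n" for n
        proof (cases "n < k")
          case True
          then have "e n = (SOME x. x \<in> D \<inter> V n)" unfolding e_def t_def by simp
          then show ?thesis using someI_ex[OF ex[of n]] by simp
        next
          case False
          then have "V n = topspace X" using k by auto
          then show ?thesis using False d0 D(2) unfolding e_def by auto
        qed
        then show ?thesis by (simp add: PiE_UNIV_domain)
      qed
      ultimately show ?thesis using V(4) by blast
    qed
    have fin: "finite {A\<in>U. e \<in> A}" if eE: "e \<in> E" for e
    proof -
      obtain V where V: "openin ?XN V" "e \<in> V" "finite {A\<in>U. A \<inter> V \<noteq> {}}"
        using U Etop[OF eE] unfolding locally_finite_in_def by blast
      have "{A\<in>U. e \<in> A} \<subseteq> {A\<in>U. A \<inter> V \<noteq> {}}" using V(2) by blast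
      then show ?thesis using V(3) finite_subset by blast
    qed
    have "U \<subseteq> {{}} \<union> (\<Union>e\<in>E. {A\<in>U. e \<in> A})" using hit by blast
    moreover have "countable ({{}} \<union> (\<Union>e\<in>E. {A\<in>U. e \<in> A}))"
      using cE fin by (simp add: countable_finite)
    ultimately show ?thesis by (rule countable_subset)
  qed
qed

theorem proposition4p5:
  fixes X :: "'a topology" and f :: "'g::ab_group_add \<Rightarrow> 'a"
  assumes "infinite (UNIV :: 'g set)"
    and "\<exists>a b. a \<in> topspace X \<and> b \<in> topspace X \<and> a \<noteq> b"
    and "korovin_mapping X f"
    and "pseudo_aleph1_compact (product_topology (\<lambda>_::nat. X) UNIV)
         \<or> first_countable X \<or> separable_space X"
  shows "t35_space (subtopology (product_topology (\<lambda>_::'g. X) UNIV) (korovin_orbit f))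
         \<longleftrightarrow> t35_space X"
proof
  interpret KOR X f using assms(3) by unfold_locales
  let ?YT = "subtopology (product_topology (\<lambda>_::'g. X) UNIV) (korovin_orbit f)"
  assume TY: "t35_space ?YT"
  show "t35_space X"
    unfolding t35_space_def
  proof (intro allI impI)
    fix F x assume Fx: "closedin X F \<and> x \<in> topspace X \<and> x \<notin> F"
    have "\<exists>u\<in>Y. \<forall>a\<in>{0}. u a = x" using realize[of "{0}" "\<lambda>_. x"] Fx by simp
    then obtain p where p: "p \<in> Y" "p 0 = x" by blast
    have proj: "continuous_map ?YT X (\<lambda>u. u 0)"
      by (rule continuous_map_from_subtopology, rule continuous_map_product_projection) simp
    define C where "C = {u \<in> topspace ?YT. u 0 \<in> F}"
    have cC: "closedin ?YT C" unfolding C_def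
      using closedin_continuous_map_preimage[OF proj] Fx by blast
    have pT: "p \<in> topspace ?YT" using p(1) Y_sub by (simp add: subset_iff)
    have pC: "p \<notin> C" using p Fx C_def by simp
    obtain \<psi> where \<psi>: "continuous_map ?YT euclideanreal \<psi>" "\<psi> p = 1" "\<psi> ` C \<subseteq> {0}"
      using TY cC pT pC unfolding t35_space_def by blast
    define \<phi> where "\<phi> u = max 0 (min 1 (\<psi> u))" for u
    have c\<phi>: "continuous_map ?YT euclideanreal \<phi>"
      unfolding \<phi>_def by (intro continuous_map_real_max continuous_map_real_min \<psi>(1)) simp_all
    interpret K: KORPHI X f \<phi> by unfold_locales (rule c\<phi>)
    have bnd: "0 \<le> \<phi> u \<and> \<phi> u \<le> 1" for u unfolding \<phi>_def by simp
    have p1: "\<phi> p = 1" unfolding \<phi>_def using \<psi>(2) by simp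
    have C0: "\<phi> u = 0" if "u \<in> Y" "u 0 \<in> F" for u
    proof -
      have "u \<in> topspace ?YT" using that(1) Y_sub by (simp add: subset_iff)
      then have "u \<in> C" unfolding C_def using that(2) by simp
      then have "\<psi> u = 0" using \<psi>(3) by blast
      then show ?thesis unfolding \<phi>_def by simp
    qed
    have osc: "\<exists>W. openin XG W \<and> z \<in> W \<and> (\<forall>q\<in>Y\<inter>W. \<forall>q'\<in>Y\<inter>W. \<bar>\<phi> q - \<phi> q'\<bar> \<le> e)"
      if z: "z \<in> topspace XG" and e: "e > 0" for z e
    proof -
      have fromPA: ?thesis if pa: "pseudo_aleph1_compact (product_topology (\<lambda>_::nat. X) UNIV)"
      proof -
        have e4: "e/4 > 0" using e by simp
        obtain M where M: "countable M" "\<forall>q\<in>Y. \<forall>q'\<in>Y. (\<forall>a\<in>M. q a = q' a) \<longrightarrow> \<bar>\<phi> q - \<phi> q'\<bar> \<le> e/4"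
          using K.dep_exists[OF pa assms(1) e4] by blast
        show ?thesis using K.dep_osc[OF M(1) _ z e4] M(2) by simp
      qed
      show ?thesis
      proof (cases "first_countable X")
        case True then show ?thesis using K.osc_fc[OF True z e] by blast
      next
        case False
        then have "pseudo_aleph1_compact (product_topology (\<lambda>_::nat. X) UNIV)"
          using assms(4) sep_pa by blast
        then show ?thesis by (rule fromPA)
      qed
    qed
    have "F \<subseteq> topspace X" using Fx closedin_subset by blast
    then obtain h where "continuous_map X euclideanreal h" "h (p 0) = 1" "h ` F \<subseteq> {0}"
      using K.final[OF bnd osc p(1) p1 _ C0] by blast
    then show "\<exists>h. continuous_map X euclideanreal h \<and> h x = 1 \<and> h ` F \<subseteq> {0}"
      using p(2) by blast
  qed
next
  assume "t35_space X"
  then have "completely_regular_space X" using t35_iff_crs by blast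
  then have "completely_regular_space (product_topology (\<lambda>_::'g. X) UNIV)"
    using completely_regular_space_product_topology by blast
  then have "completely_regular_space (subtopology (product_topology (\<lambda>_::'g. X) UNIV) (korovin_orbit f))"
    using completely_regular_space_subtopology by blast
  then show "t35_space (subtopology (product_topology (\<lambda>_::'g. X) UNIV) (korovin_orbit f))"
    using t35_iff_crs by blast
qed


end
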